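(* Let $\mu>1/2$, $0<\nu<1/2$, $M>0$, and let $g_1,g_2\in X$ with $\|g_i\|_\infty\le M$; let $F_1,F_2$ be the corresponding functions $F[g_1],F[g_2]$. Then there is a constant $c(\mu,\nu,M)$ depending only on $\mu,\nu,M$ such that $$|F_1'(x)-F_2'(x)|\le c(\mu,\nu,M)\|g_2-g_1\|_\infty\frac{1}{|x|^{2\nu}(x^2+1)^{\mu-\nu}}\quad(x\ne0),$$ $$|F_1(x)-F_2(x)|\le c(\mu,\nu,M)\|g_2-g_1\|_\infty |x|^{1-2\mu}\quad(|x|\ge1),\qquad |F_1(x)-F_2(x)|\le c(\mu,\nu,M)\|g_2-g_1\|_\infty\quad(x\in\mathbb{R}).$$
   Context: $X=\{g\in C(\mathbb{R})\cap L^\infty(\mathbb{R})\text{ real}:\ \lim_{x\to\pm\infty}g(x)=0\}$ with sup norm. For $g\in X$: $h^{-1}(0)=0$, $(h^{-1})'(x)=|x|^{\nu-1}(x^2+1)^{(\mu-\nu)/2}e^{g(x)}$; $\kappa>0$ with $\int_{\mathbb{R}}\frac{\kappa}{x h^{-1}(x)(h^{-1})'(x)}dx=(\mu-\nu)\pi$; $F=F[g]$ is the continuous function with $F'(x)=\frac{\kappa}{xh^{-1}(x)(h^{-1})'(x)}$ ($x\neq0$) and $F(+\infty)=0$ (so $F(-\infty)=-(\mu-\nu)\pi$). *)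

theory Defs
  imports "HOL-Analysis.Analysis"
begin

definition inX :: "(real \<Rightarrow> real) \<Rightarrow> bool" where
  "inX g \<longleftrightarrow> continuous_on UNIV g \<and> bounded (range g)
     \<and> (g \<longlongrightarrow> 0) at_top \<and> (g \<longlongrightarrow> 0) at_bot"

definition supnorm :: "(real \<Rightarrow> real) \<Rightarrow> real" where
  "supnorm g = (SUP x. \<bar>g x\<bar>)"

definition hinvd :: "real \<Rightarrow> real \<Rightarrow> (real \<Rightarrow> real) \<Rightarrow> real \<Rightarrow> real" where
  "hinvd \<mu> \<nu> g x = \<bar>x\<bar> powr (\<nu> - 1) * (x\<^sup>2 + 1) powr ((\<mu> - \<nu>) / 2) * exp (g x)"

definition hinv :: "real \<Rightarrow> real \<Rightarrow> (real \<Rightarrow> real) \<Rightarrow> real \<Rightarrow> real" where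
  "hinv \<mu> \<nu> g x = (LBINT t=0..x. hinvd \<mu> \<nu> g t)"

text \<open>kappa chosen so that the integral of F' over the real line equals (mu-nu) pi.\<close>
definition kappa :: "real \<Rightarrow> real \<Rightarrow> (real \<Rightarrow> real) \<Rightarrow> real" where
  "kappa \<mu> \<nu> g = (\<mu> - \<nu>) * pi / (LBINT x. 1 / (x * hinv \<mu> \<nu> g x * hinvd \<mu> \<nu> g x))"

definition Fd :: "real \<Rightarrow> real \<Rightarrow> (real \<Rightarrow> real) \<Rightarrow> real \<Rightarrow> real" where
  "Fd \<mu> \<nu> g x = kappa \<mu> \<nu> g / (x * hinv \<mu> \<nu> g x * hinvd \<mu> \<nu> g x)"

text \<open>F with F(+infinity) = 0: F(x) = - integral of F' over (x, infinity).\<close>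
definition FF :: "real \<Rightarrow> real \<Rightarrow> (real \<Rightarrow> real) \<Rightarrow> real \<Rightarrow> real" where
  "FF \<mu> \<nu> g x = - (LBINT t:{x<..}. Fd \<mu> \<nu> g t)"

end

theory Submission
  imports Defs "HOL-Real_Asymp.Real_Asymp"
begin


lemma einterval_0_real: "einterval 0 (ereal b) = {0<..<b}"
  by (auto simp: einterval_def zero_ereal_def)

lemma pow01:
  fixes p b :: real
  assumes p: "p > -1" and b: "b > 0"
  shows "set_integrable lborel {0<..<b} (\<lambda>t. t powr p)"
    "(LBINT t:{0<..<b}. t powr p) = b powr (p+1) / (p+1)"
proof -
  let ?F = "\<lambda>t::real. t powr (p+1) / (p+1)"
  have h1: "0 < ereal b" using b by (simp add: zero_ereal_def)
  have h2: "(?F has_real_derivative x powr p) (at x)" if x: "0 < ereal x" "ereal x < ereal b" for x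
  proof -
    from x have "x > 0" by (simp add: zero_ereal_def)
    then show ?thesis
      using DERIV_cdivide[OF has_real_derivative_powr[of x "p+1"], of "p+1"] p by simp
  qed
  have h3: "isCont (\<lambda>t. t powr p) x" if x: "0 < ereal x" "ereal x < ereal b" for x
  proof -
    from x have "x > 0" by (simp add: zero_ereal_def)
    then show ?thesis by (auto intro!: continuous_intros)
  qed
  have h4: "AE x in lborel. 0 < ereal x \<longrightarrow> ereal x < ereal b \<longrightarrow> 0 \<le> x powr p" by simp
  have h5: "((?F \<circ> real_of_ereal) \<longlongrightarrow> 0) (at_right 0)"
      unfolding zero_ereal_def ereal_tendsto_simps1
      using p by (auto intro!: tendsto_eq_intros tendsto_zero_powrI
        simp: eventually_at_right_less[THEN eventually_mono])
  have h6: "((?F \<circ> real_of_ereal) \<longlongrightarrow> b powr (p+1) / (p+1)) (at_left (ereal b))"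
      unfolding ereal_tendsto_simps1
      using p b by (auto intro!: tendsto_eq_intros)
  note * = interval_integral_FTC_nonneg[OF h1 h2 h3 h4 h5 h6]
  then show "set_integrable lborel {0<..<b} (\<lambda>t. t powr p)"
    "(LBINT t:{0<..<b}. t powr p) = b powr (p+1) / (p+1)"
    using b by (simp_all add: einterval_0_real interval_lebesgue_integral_def zero_ereal_def)
qed

lemma powinf:
  fixes p b :: real
  assumes p: "p < -1" and b: "b > 0"
  shows "set_integrable lborel {b<..} (\<lambda>t. t powr p)"
    "(LBINT t:{b<..}. t powr p) = - (b powr (p+1) / (p+1))"
proof -
  let ?F = "\<lambda>t::real. t powr (p+1) / (p+1)"
  have h1: "ereal b < \<infinity>" by simp
  have h2: "(?F has_real_derivative x powr p) (at x)" if x: "ereal b < ereal x" "ereal x < \<infinity>" for x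
  proof -
    from x have "x > 0" using b by simp
    then show ?thesis
      using DERIV_cdivide[OF has_real_derivative_powr[of x "p+1"], of "p+1"] p by simp
  qed
  have h3: "isCont (\<lambda>t. t powr p) x" if x: "ereal b < ereal x" "ereal x < \<infinity>" for x
  proof -
    from x have "x > 0" using b by simp
    then show ?thesis by (auto intro!: continuous_intros)
  qed
  have h4: "AE x in lborel. ereal b < ereal x \<longrightarrow> ereal x < \<infinity> \<longrightarrow> 0 \<le> x powr p" by simp
  have h5: "((?F \<circ> real_of_ereal) \<longlongrightarrow> b powr (p+1) / (p+1)) (at_right (ereal b))"
      unfolding ereal_tendsto_simps1
      using p b by (auto intro!: tendsto_eq_intros)
  have h6: "((?F \<circ> real_of_ereal) \<longlongrightarrow> 0) (at_left \<infinity>)"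
      unfolding ereal_tendsto_simps1
      using p by real_asymp
  note * = interval_integral_FTC_nonneg[OF h1 h2 h3 h4 h5 h6]
  have e: "einterval (ereal b) \<infinity> = {b<..}" by (auto simp: einterval_def)
  from * show "set_integrable lborel {b<..} (\<lambda>t. t powr p)"
    "(LBINT t:{b<..}. t powr p) = - (b powr (p+1) / (p+1))"
    by (simp_all add: e interval_lebesgue_integral_def)
qed

lemma exp_diff_le:
  fixes a b M :: real
  assumes "\<bar>a\<bar> \<le> M" "\<bar>b\<bar> \<le> M"
  shows "\<bar>exp a - exp b\<bar> \<le> exp M * \<bar>a - b\<bar>"
proof -
  have key: "exp u - exp v \<le> exp u * (u - v)" if "v \<le> u" for u v :: real
  proof -
    have "1 + (v - u) \<le> exp (v - u)" by (rule exp_ge_add_one_self)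
    then have "exp u * (1 + (v - u)) \<le> exp u * exp (v - u)" by simp
    also have "exp u * exp (v - u) = exp v" by (simp add: exp_add[symmetric])
    finally show ?thesis by (simp add: algebra_simps)
  qed
  show ?thesis
  proof (cases "b \<le> a")
    case True
    have "exp a - exp b \<le> exp a * (a - b)" using key[OF True] .
    also have "\<dots> \<le> exp M * (a - b)" using True assms by (intro mult_right_mono) auto
    finally show ?thesis using True by simp
  next
    case False
    then have "a \<le> b" by simp
    have "exp b - exp a \<le> exp b * (b - a)" using key[OF \<open>a \<le> b\<close>] .
    also have "\<dots> \<le> exp M * (b - a)" using \<open>a \<le> b\<close> assms by (intro mult_right_mono) auto
    finally show ?thesis using \<open>a \<le> b\<close> by (simp add: abs_minus_commute)
  qed
qed

lemma G1:
  fixes w g :: "real \<Rightarrow> real" and M :: real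
  assumes A: "A \<in> sets lborel" and wi: "set_integrable lborel A w"
    and wm: "w \<in> borel_measurable borel" and w0: "\<And>t. t \<in> A \<Longrightarrow> 0 \<le> w t"
    and gm: "g \<in> borel_measurable borel" and gM: "\<And>t. \<bar>g t\<bar> \<le> M"
  shows "set_integrable lborel A (\<lambda>t. w t * exp (g t))"
    "exp (-M) * (LBINT t:A. w t) \<le> (LBINT t:A. w t * exp (g t))"
    "(LBINT t:A. w t * exp (g t)) \<le> exp M * (LBINT t:A. w t)"
proof -
  have wi2: "set_integrable lborel A (\<lambda>t. exp M * w t)"
    using wi by simp
  show i: "set_integrable lborel A (\<lambda>t. w t * exp (g t))"
  proof (rule set_integrable_bound[OF wi2])
    show "set_borel_measurable lborel A (\<lambda>t. w t * exp (g t))"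
      unfolding set_borel_measurable_def using A wm gm by measurable
    show "AE x in lborel. x \<in> A \<longrightarrow> norm (w x * exp (g x)) \<le> norm (exp M * w x)"
    proof (rule AE_I2, intro impI)
      fix x assume "x \<in> A"
      then have "0 \<le> w x" by (rule w0)
      moreover have "exp (g x) \<le> exp M" using gM[of x] by simp
      ultimately have "w x * exp (g x) \<le> w x * exp M" by (intro mult_left_mono) auto
      then show "norm (w x * exp (g x)) \<le> norm (exp M * w x)"
        using \<open>0 \<le> w x\<close> by (simp add: abs_mult mult.commute)
    qed
  qed
  have wi3: "set_integrable lborel A (\<lambda>t. exp (-M) * w t)"
    using wi by simp
  have "(LBINT t:A. exp (-M) * w t) \<le> (LBINT t:A. w t * exp (g t))"
  proof (rule set_integral_mono[OF wi3 i])
    fix t assume "t \<in> A"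
    then have "0 \<le> w t" by (rule w0)
    moreover have "exp (-M) \<le> exp (g t)" using gM[of t] by simp
    ultimately show "exp (-M) * w t \<le> w t * exp (g t)"
      by (simp add: mult.commute mult_left_mono)
  qed
  then show "exp (-M) * (LBINT t:A. w t) \<le> (LBINT t:A. w t * exp (g t))" by simp
  have "(LBINT t:A. w t * exp (g t)) \<le> (LBINT t:A. exp M * w t)"
  proof (rule set_integral_mono[OF i wi2])
    fix t assume "t \<in> A"
    then have "0 \<le> w t" by (rule w0)
    moreover have "exp (g t) \<le> exp M" using gM[of t] by simp
    ultimately have "w t * exp (g t) \<le> w t * exp M" by (intro mult_left_mono) auto
    then show "w t * exp (g t) \<le> exp M * w t" by (simp add: mult.commute)
  qed
  then show "(LBINT t:A. w t * exp (g t)) \<le> exp M * (LBINT t:A. w t)" by simp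
qed

lemma G2:
  fixes w g1 g2 :: "real \<Rightarrow> real" and M \<delta> :: real
  assumes A: "A \<in> sets lborel" and wi: "set_integrable lborel A w"
    and wm: "w \<in> borel_measurable borel" and w0: "\<And>t. t \<in> A \<Longrightarrow> 0 \<le> w t"
    and gm1: "g1 \<in> borel_measurable borel" and gM1: "\<And>t. \<bar>g1 t\<bar> \<le> M"
    and gm2: "g2 \<in> borel_measurable borel" and gM2: "\<And>t. \<bar>g2 t\<bar> \<le> M"
    and d: "\<And>t. \<bar>g1 t - g2 t\<bar> \<le> \<delta>"
  shows "\<bar>(LBINT t:A. w t * exp (g1 t)) - (LBINT t:A. w t * exp (g2 t))\<bar>
     \<le> exp M * \<delta> * (LBINT t:A. w t)"
proof -
  have i1: "set_integrable lborel A (\<lambda>t. w t * exp (g1 t))" by (rule G1(1)[OF A wi wm w0 gm1 gM1])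
  have i2: "set_integrable lborel A (\<lambda>t. w t * exp (g2 t))" by (rule G1(1)[OF A wi wm w0 gm2 gM2])
  have id: "set_integrable lborel A (\<lambda>t. w t * exp (g1 t) - w t * exp (g2 t))"
    using i1 i2 by (rule set_integral_diff)
  have eq: "(LBINT t:A. w t * exp (g1 t)) - (LBINT t:A. w t * exp (g2 t))
     = (LBINT t:A. w t * exp (g1 t) - w t * exp (g2 t))"
    using i1 i2 by (simp add: set_integral_diff)
  have wi2: "set_integrable lborel A (\<lambda>t. exp M * \<delta> * w t)" using wi by simp
  have "\<bar>LBINT t:A. w t * exp (g1 t) - w t * exp (g2 t)\<bar>
      \<le> (LBINT t:A. \<bar>w t * exp (g1 t) - w t * exp (g2 t)\<bar>)"
    using id unfolding set_lebesgue_integral_def set_integrable_def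
    by (metis (no_types, lifting) Bochner_Integration.integral_cong abs_mult abs_of_nonneg indicator_pos_le integral_abs_bound real_scaleR_def)
  also have "\<dots> \<le> (LBINT t:A. exp M * \<delta> * w t)"
  proof (rule set_integral_mono[OF set_integrable_abs[OF id] wi2])
    fix t assume "t \<in> A"
    then have "0 \<le> w t" by (rule w0)
    have "\<bar>w t * exp (g1 t) - w t * exp (g2 t)\<bar> = w t * \<bar>exp (g1 t) - exp (g2 t)\<bar>"
      using \<open>0 \<le> w t\<close> by (simp add: right_diff_distrib[symmetric] abs_mult)
    also have "\<dots> \<le> w t * (exp M * \<bar>g1 t - g2 t\<bar>)"
      using \<open>0 \<le> w t\<close> exp_diff_le[OF gM1 gM2] by (intro mult_left_mono) auto
    also have "\<dots> \<le> w t * (exp M * \<delta>)"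
      using \<open>0 \<le> w t\<close> d[of t] by (intro mult_left_mono) auto
    finally show "\<bar>w t * exp (g1 t) - w t * exp (g2 t)\<bar> \<le> exp M * \<delta> * w t" by (simp add: ac_simps)
  qed
  also have "\<dots> = exp M * \<delta> * (LBINT t:A. w t)" by simp
  finally show ?thesis using eq by simp
qed

lemma set_integrable_reflect:
  fixes f :: "real \<Rightarrow> real"
  assumes "set_integrable lborel S f"
  shows "set_integrable lborel {x. -x \<in> S} (\<lambda>x. f (-x))"
proof -
  have "integrable lborel (\<lambda>x. indicator S (0 + (-1) * x) *\<^sub>R f (0 + (-1) * x))"
    using lborel_integrable_real_affine[of "\<lambda>x. indicator S x *\<^sub>R f x" "-1" 0] assms
    unfolding set_integrable_def by simp
  then show ?thesis unfolding set_integrable_def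
    by (simp add: indicator_def)
qed

definition ww :: "real \<Rightarrow> real \<Rightarrow> real \<Rightarrow> real" where
  "ww \<mu> \<nu> t = \<bar>t\<bar> powr (\<nu> - 1) * (t\<^sup>2 + 1) powr ((\<mu> - \<nu>) / 2)"

lemma hinvd_ww: "hinvd \<mu> \<nu> g t = ww \<mu> \<nu> t * exp (g t)"
  by (simp add: hinvd_def ww_def)

locale PP =
  fixes \<mu> \<nu> :: real
  assumes mu: "\<mu> > 1/2" and nu0: "0 < \<nu>" and nu1: "\<nu> < 1/2"
begin

abbreviation "w \<equiv> ww \<mu> \<nu>"

lemma munu: "\<nu> < \<mu>" using mu nu1 by simp

lemma w_nonneg: "0 \<le> w t" by (simp add: ww_def)

lemma w_pos: "t \<noteq> 0 \<Longrightarrow> 0 < w t"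
proof -
  assume "t \<noteq> 0"
  have "0 < t\<^sup>2 + 1" by (simp add: add_nonneg_pos)
  then show ?thesis using \<open>t \<noteq> 0\<close> unfolding ww_def by simp
qed

lemma w_meas: "w \<in> borel_measurable borel"
  unfolding ww_def by measurable

lemma w_even: "w (-t) = w t" by (simp add: ww_def)

lemma w_up:
  assumes "0 < t" "t \<le> b"
  shows "w t \<le> (b\<^sup>2 + 1) powr ((\<mu> - \<nu>) / 2) * t powr (\<nu> - 1)"
proof -
  have "t\<^sup>2 \<le> b\<^sup>2" using assms by (intro power_mono) auto
  then have "(t\<^sup>2 + 1) powr ((\<mu> - \<nu>) / 2) \<le> (b\<^sup>2 + 1) powr ((\<mu> - \<nu>) / 2)"
    using munu by (intro powr_mono2) auto
  then show ?thesis using assms unfolding ww_def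
    by (simp add: mult.commute mult_left_mono)
qed

lemma w_lo1:
  shows "\<bar>t\<bar> powr (\<nu> - 1) \<le> w t"
proof -
  have "1 \<le> (t\<^sup>2 + 1) powr ((\<mu> - \<nu>) / 2)"
    using munu by (intro ge_one_powr_ge_zero) auto
  then show ?thesis unfolding ww_def
    using mult_left_mono[of 1 "(t\<^sup>2 + 1) powr ((\<mu> - \<nu>) / 2)" "\<bar>t\<bar> powr (\<nu> - 1)"]
    by simp
qed

lemma w_lo2:
  assumes "t \<noteq> 0"
  shows "\<bar>t\<bar> powr (\<mu> - 1) \<le> w t"
proof -
  have "(t\<^sup>2) powr ((\<mu> - \<nu>) / 2) \<le> (t\<^sup>2 + 1) powr ((\<mu> - \<nu>) / 2)"
    using munu by (intro powr_mono2) auto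
  moreover have "(t\<^sup>2) powr ((\<mu> - \<nu>) / 2) = \<bar>t\<bar> powr (\<mu> - \<nu>)"
  proof -
    have eq: "t\<^sup>2 = \<bar>t\<bar> powr 2" using assms by (simp add: powr_numeral)
    have "(t\<^sup>2) powr ((\<mu> - \<nu>) / 2) = (\<bar>t\<bar> powr 2) powr ((\<mu> - \<nu>) / 2)"
      by (simp only: eq)
    also have "\<dots> = \<bar>t\<bar> powr (2 * ((\<mu> - \<nu>) / 2))" by (rule powr_powr)
    also have "2 * ((\<mu> - \<nu>) / 2) = \<mu> - \<nu>" by simp
    finally show ?thesis .
  qed
  ultimately have "\<bar>t\<bar> powr (\<nu> - 1) * \<bar>t\<bar> powr (\<mu> - \<nu>) \<le> w t"
    unfolding ww_def by (intro mult_left_mono) auto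
  then show ?thesis by (simp add: powr_add[symmetric])
qed

lemma W_pos:
  assumes b: "0 < b"
  shows "set_integrable lborel {0<..<b} w"
    "b powr \<nu> / \<nu> \<le> (LBINT t:{0<..<b}. w t)"
    "b powr \<mu> / \<mu> \<le> (LBINT t:{0<..<b}. w t)"
proof -
  have p1: "set_integrable lborel {0<..<b} (\<lambda>t. t powr (\<nu> - 1))"
    "(LBINT t:{0<..<b}. t powr (\<nu> - 1)) = b powr \<nu> / \<nu>"
    using pow01[of "\<nu> - 1" b] nu0 b by auto
  have p2: "set_integrable lborel {0<..<b} (\<lambda>t. t powr (\<mu> - 1))"
    "(LBINT t:{0<..<b}. t powr (\<mu> - 1)) = b powr \<mu> / \<mu>"
    using pow01[of "\<mu> - 1" b] mu b by auto
  have bi: "set_integrable lborel {0<..<b} (\<lambda>t. (b\<^sup>2 + 1) powr ((\<mu> - \<nu>) / 2) * t powr (\<nu> - 1))"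
    using p1(1) by simp
  show wi: "set_integrable lborel {0<..<b} w"
  proof (rule set_integrable_bound[OF bi])
    show "set_borel_measurable lborel {0<..<b} w"
      unfolding set_borel_measurable_def using w_meas by measurable
    show "AE x in lborel. x \<in> {0<..<b} \<longrightarrow> norm (w x) \<le> norm ((b\<^sup>2 + 1) powr ((\<mu> - \<nu>) / 2) * x powr (\<nu> - 1))"
      using w_up w_nonneg by (intro AE_I2) (auto simp: abs_mult)
  qed
  have "(LBINT t:{0<..<b}. t powr (\<nu> - 1)) \<le> (LBINT t:{0<..<b}. w t)"
    using w_lo1 by (intro set_integral_mono[OF p1(1) wi]) (metis abs_of_pos greaterThanLessThan_iff)
  then show "b powr \<nu> / \<nu> \<le> (LBINT t:{0<..<b}. w t)" using p1 by simp
  have "(LBINT t:{0<..<b}. t powr (\<mu> - 1)) \<le> (LBINT t:{0<..<b}. w t)"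
    using w_lo2 by (intro set_integral_mono[OF p2(1) wi]) (metis abs_of_pos greaterThanLessThan_iff less_irrefl)
  then show "b powr \<mu> / \<mu> \<le> (LBINT t:{0<..<b}. w t)" using p2 by simp
qed

lemma W_neg:
  assumes b: "0 < b"
  shows "set_integrable lborel {-b<..<0} w"
    "(LBINT t:{-b<..<0}. w t) = (LBINT t:{0<..<b}. w t)"
proof -
  have e: "{x. - x \<in> {0<..<b}} = {-b<..<0}" by auto
  show "set_integrable lborel {-b<..<0} w"
    using set_integrable_reflect[OF W_pos(1)[OF b], unfolded e w_even] .
  have e2: "{x. - x \<in> {-b<..<0}} = {0<..<b}" by auto
  show "(LBINT t:{-b<..<0}. w t) = (LBINT t:{0<..<b}. w t)"
    by (subst set_integral_reflect) (simp only: e2 w_even)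
qed

end

context PP begin

definition W0 :: "real \<Rightarrow> real" where "W0 b = (LBINT t:{0<..<b}. w t)"

lemma einterval_real_0: "einterval (ereal x) 0 = {x<..<0}"
  by (auto simp: einterval_def zero_ereal_def)

lemma hinvd_ext: "hinvd \<mu> \<nu> g = (\<lambda>t. w t * exp (g t))"
  by (rule ext) (simp add: hinvd_ww)

lemma hinv_pos: "0 < x \<Longrightarrow> hinv \<mu> \<nu> g x = (LBINT t:{0<..<x}. w t * exp (g t))"
  unfolding hinv_def interval_lebesgue_integral_def
  by (simp add: einterval_0_real hinvd_ext zero_ereal_def)

lemma hinv_neg: "x < 0 \<Longrightarrow> hinv \<mu> \<nu> g x = - (LBINT t:{x<..<0}. w t * exp (g t))"
  unfolding hinv_def interval_lebesgue_integral_def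
  by (simp add: einterval_real_0 hinvd_ext zero_ereal_def)

lemma W0_lo:
  assumes "0 < b"
  shows "b powr \<nu> / \<nu> \<le> W0 b" "b powr \<mu> / \<mu> \<le> W0 b" "0 < W0 b"
proof -
  show "b powr \<nu> / \<nu> \<le> W0 b" "b powr \<mu> / \<mu> \<le> W0 b"
    using W_pos[OF assms] unfolding W0_def by auto
  moreover have "0 < b powr \<nu> / \<nu>" using assms nu0 by simp
  ultimately show "0 < W0 b" by linarith
qed

lemma W0_neg: "x < 0 \<Longrightarrow> set_integrable lborel {x<..<0} w \<and> W0 \<bar>x\<bar> = (LBINT t:{x<..<0}. w t)"
proof -
  assume xn: "x < 0"
  have b: "0 < -x" using xn by simp
  have e: "{- (-x)<..<0} = {x<..<0}" by simp
  note Wn = W_neg[OF b, unfolded e]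
  then show ?thesis using xn unfolding W0_def by simp
qed

lemma xhinv_bounds:
  fixes g :: "real \<Rightarrow> real" and M :: real
  assumes gm: "g \<in> borel_measurable borel" and gM: "\<And>t. \<bar>g t\<bar> \<le> M" and x: "x \<noteq> 0"
  shows "exp (-M) * (\<bar>x\<bar> * W0 \<bar>x\<bar>) \<le> x * hinv \<mu> \<nu> g x \<and>
    x * hinv \<mu> \<nu> g x \<le> exp M * (\<bar>x\<bar> * W0 \<bar>x\<bar>)"
proof (cases "0 < x")
  case True
  note G = G1[OF _ W_pos(1)[OF True] w_meas _ gm gM, simplified]
  let ?S = "LBINT t:{0<..<x}. w t * exp (g t)"
  have 1: "exp (-M) * W0 x \<le> ?S" "?S \<le> exp M * W0 x"
    using G(2,3) w_nonneg unfolding W0_def by auto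
  have "x * (exp (-M) * W0 x) \<le> x * ?S" "x * ?S \<le> x * (exp M * W0 x)"
    using 1 True by (intro mult_left_mono; simp)+
  then show ?thesis using True unfolding hinv_pos[OF True] by (simp add: ac_simps)
next
  case False
  then have xn: "x < 0" using x by simp
  note Wn = W0_neg[OF xn]
  note G = G1[OF _ conjunct1[OF Wn] w_meas _ gm gM, simplified]
  let ?S = "LBINT t:{x<..<0}. w t * exp (g t)"
  have 1: "exp (-M) * W0 \<bar>x\<bar> \<le> ?S" "?S \<le> exp M * W0 \<bar>x\<bar>"
    using G(2,3) w_nonneg Wn by auto
  have "(-x) * (exp (-M) * W0 \<bar>x\<bar>) \<le> (-x) * ?S" "(-x) * ?S \<le> (-x) * (exp M * W0 \<bar>x\<bar>)"
    using 1 xn by (intro mult_left_mono; simp)+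
  then show ?thesis using xn unfolding hinv_neg[OF xn] by (simp add: ac_simps)
qed

lemma xhinv_diff:
  fixes g1 g2 :: "real \<Rightarrow> real" and M \<delta> :: real
  assumes gm1: "g1 \<in> borel_measurable borel" and gM1: "\<And>t. \<bar>g1 t\<bar> \<le> M"
    and gm2: "g2 \<in> borel_measurable borel" and gM2: "\<And>t. \<bar>g2 t\<bar> \<le> M"
    and d: "\<And>t. \<bar>g1 t - g2 t\<bar> \<le> \<delta>" and x: "x \<noteq> 0"
  shows "\<bar>x * hinv \<mu> \<nu> g1 x - x * hinv \<mu> \<nu> g2 x\<bar> \<le> exp M * \<delta> * (\<bar>x\<bar> * W0 \<bar>x\<bar>)"
proof -
  have "\<bar>hinv \<mu> \<nu> g1 x - hinv \<mu> \<nu> g2 x\<bar> \<le> exp M * \<delta> * W0 \<bar>x\<bar>"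
  proof (cases "0 < x")
    case True
    have "\<bar>(LBINT t:{0<..<x}. w t * exp (g1 t)) - (LBINT t:{0<..<x}. w t * exp (g2 t))\<bar>
       \<le> exp M * \<delta> * (LBINT t:{0<..<x}. w t)"
      using w_nonneg by (intro G2[OF _ W_pos(1)[OF True] w_meas _ gm1 gM1 gm2 gM2 d]) auto
    then show ?thesis using True unfolding W0_def hinv_pos[OF True] by simp
  next
    case False
    then have xn: "x < 0" using x by simp
    note Wn = W0_neg[OF xn]
    have "\<bar>(LBINT t:{x<..<0}. w t * exp (g1 t)) - (LBINT t:{x<..<0}. w t * exp (g2 t))\<bar>
       \<le> exp M * \<delta> * (LBINT t:{x<..<0}. w t)"
      using w_nonneg by (intro G2[OF _ conjunct1[OF Wn] w_meas _ gm1 gM1 gm2 gM2 d]) auto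
    then show ?thesis using Wn unfolding hinv_neg[OF xn] by (simp add: abs_minus_commute)
  qed
  then have "\<bar>x\<bar> * \<bar>hinv \<mu> \<nu> g1 x - hinv \<mu> \<nu> g2 x\<bar> \<le> \<bar>x\<bar> * (exp M * \<delta> * W0 \<bar>x\<bar>)"
    by (intro mult_left_mono) auto
  then show ?thesis by (simp add: abs_mult right_diff_distrib[symmetric] ac_simps)
qed

lemma xhinv0: "x \<noteq> 0 \<Longrightarrow> x * hinv \<mu> \<nu> (\<lambda>_. 0) x = \<bar>x\<bar> * W0 \<bar>x\<bar>"
  using xhinv_bounds[of "\<lambda>_. 0" 0 x] by simp

lemma hinv_0: "hinv \<mu> \<nu> g 0 = 0"
  unfolding hinv_def by (simp add: zero_ereal_def)

lemma hinv_sign: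
  fixes g :: "real \<Rightarrow> real" and M :: real
  assumes gm: "g \<in> borel_measurable borel" and gM: "\<And>t. \<bar>g t\<bar> \<le> M"
  shows "0 \<le> x \<Longrightarrow> 0 \<le> hinv \<mu> \<nu> g x" "x \<le> 0 \<Longrightarrow> hinv \<mu> \<nu> g x \<le> 0"
proof -
  have key: "0 \<le> x * hinv \<mu> \<nu> g x" for x
  proof (cases "x = 0")
    case False
    have "0 \<le> exp (-M) * (\<bar>x\<bar> * W0 \<bar>x\<bar>)" using W0_lo(3)[of "\<bar>x\<bar>"] False by simp
    then show ?thesis using xhinv_bounds[OF gm gM False] by linarith
  qed simp
  show "0 \<le> x \<Longrightarrow> 0 \<le> hinv \<mu> \<nu> g x"
    using key[of x] hinv_0 by (cases "x = 0") (auto simp: zero_le_mult_iff)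
  show "x \<le> 0 \<Longrightarrow> hinv \<mu> \<nu> g x \<le> 0"
    using key[of x] hinv_0 by (cases "x = 0") (auto simp: zero_le_mult_iff)
qed

lemma set_integral_subset_mono:
  fixes f :: "real \<Rightarrow> real"
  assumes "set_integrable lborel B f" "A \<in> sets lborel" "A \<subseteq> B" "\<And>t. t \<in> B \<Longrightarrow> 0 \<le> f t"
  shows "(LBINT t:A. f t) \<le> (LBINT t:B. f t)"
proof -
  have "set_integrable lborel A f" by (rule set_integrable_subset[OF assms(1-3)])
  then show ?thesis using assms unfolding set_lebesgue_integral_def set_integrable_def
    by (intro integral_mono) (auto simp: indicator_def)
qed

lemma hinv_mono:
  fixes g :: "real \<Rightarrow> real" and M :: real
  assumes gm: "g \<in> borel_measurable borel" and gM: "\<And>t. \<bar>g t\<bar> \<le> M"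
  shows "mono (hinv \<mu> \<nu> g)"
proof (rule monoI)
  fix x y :: real assume xy: "x \<le> y"
  have nn: "0 \<le> w t * exp (g t)" for t using w_nonneg by simp
  show "hinv \<mu> \<nu> g x \<le> hinv \<mu> \<nu> g y"
  proof (cases "0 < x")
    case True
    then have y: "0 < y" using xy by simp
    have "(LBINT t:{0<..<x}. w t * exp (g t)) \<le> (LBINT t:{0<..<y}. w t * exp (g t))"
      using xy nn w_nonneg by (intro set_integral_subset_mono G1(1)[OF _ W_pos(1)[OF y] w_meas _ gm gM]) auto
    then show ?thesis unfolding hinv_pos[OF True] hinv_pos[OF y] .
  next
    case False
    show ?thesis
    proof (cases "y < 0")
      case True
      then have x: "x < 0" using xy by simp
      have "(LBINT t:{y<..<0}. w t * exp (g t)) \<le> (LBINT t:{x<..<0}. w t * exp (g t))"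
        using xy nn w_nonneg by (intro set_integral_subset_mono G1(1)[OF _ conjunct1[OF W0_neg[OF x]] w_meas _ gm gM]) auto
      then show ?thesis unfolding hinv_neg[OF True] hinv_neg[OF x] by simp
    next
      case False
      then show ?thesis using hinv_sign[OF gm gM, of x] hinv_sign[OF gm gM, of y] \<open>\<not> 0 < x\<close> by simp
    qed
  qed
qed

lemma hinv_meas:
  fixes g :: "real \<Rightarrow> real" and M :: real
  assumes gm: "g \<in> borel_measurable borel" and gM: "\<And>t. \<bar>g t\<bar> \<le> M"
  shows "hinv \<mu> \<nu> g \<in> borel_measurable borel"
  by (rule borel_measurable_mono[OF hinv_mono[OF gm gM]])

end

lemma arith_prod:
  fixes h1 h2 a1 a2 E d V W :: real
  assumes "\<bar>h1 - h2\<bar> \<le> E*d*V" "0 \<le> h2" "h2 \<le> E*V" "0 \<le> a1" "a1 \<le> E*W"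
    "\<bar>a1 - a2\<bar> \<le> E*d*W" "0 \<le> E" "0 \<le> V" "0 \<le> W"
  shows "\<bar>h1*a1 - h2*a2\<bar> \<le> 2*E*E*d*V*W"
proof -
  have eq: "h1*a1 - h2*a2 = (h1-h2)*a1 + h2*(a1-a2)" by (simp add: algebra_simps)
  have 1: "\<bar>(h1-h2)*a1\<bar> \<le> (E*d*V)*(E*W)"
    unfolding abs_mult using assms by (intro mult_mono) auto
  have 2: "\<bar>h2*(a1-a2)\<bar> \<le> (E*V)*(E*d*W)"
    unfolding abs_mult using assms by (intro mult_mono) auto
  have "\<bar>h1*a1 - h2*a2\<bar> \<le> \<bar>(h1-h2)*a1\<bar> + \<bar>h2*(a1-a2)\<bar>" unfolding eq by (rule abs_triangle_ineq)
  also have "\<dots> \<le> (E*d*V)*(E*W) + (E*V)*(E*d*W)" using 1 2 by linarith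
  also have "\<dots> = 2*E*E*d*V*W" by (simp add: algebra_simps)
  finally show ?thesis .
qed

context PP begin

definition P :: "(real \<Rightarrow> real) \<Rightarrow> real \<Rightarrow> real" where
  "P g x = x * hinv \<mu> \<nu> g x * hinvd \<mu> \<nu> g x"

definition Q :: "real \<Rightarrow> real" where
  "Q x = \<bar>x\<bar> * W0 \<bar>x\<bar> * w x"

lemma Q_pos: "x \<noteq> 0 \<Longrightarrow> 0 < Q x"
  unfolding Q_def using W0_lo(3)[of "\<bar>x\<bar>"] w_pos[of x] by simp

lemma Q_eq: "Q x = P (\<lambda>_. 0) x"
proof (cases "x = 0")
  case True
  then show ?thesis by (simp add: Q_def P_def W0_def)
next
  case False
  then show ?thesis by (simp add: Q_def P_def xhinv0 hinvd_ww)
qed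

lemma P_bounds:
  fixes g :: "real \<Rightarrow> real" and M :: real
  assumes gm: "g \<in> borel_measurable borel" and gM: "\<And>t. \<bar>g t\<bar> \<le> M" and x: "x \<noteq> 0"
  shows "exp (-2*M) * Q x \<le> P g x \<and> P g x \<le> exp (2*M) * Q x"
proof -
  note B = xhinv_bounds[OF gm gM x]
  have w: "0 < w x" using w_pos[OF x] .
  have e1: "exp (-M) \<le> exp (g x)" "exp (g x) \<le> exp M" using gM[of x] by auto
  have P: "P g x = (x * hinv \<mu> \<nu> g x) * (w x * exp (g x))" by (simp add: P_def hinvd_ww)
  have V: "0 \<le> \<bar>x\<bar> * W0 \<bar>x\<bar>" using W0_lo(3)[of "\<bar>x\<bar>"] x by simp
  have "(exp (-M) * (\<bar>x\<bar> * W0 \<bar>x\<bar>)) * (w x * exp (-M)) \<le> (x * hinv \<mu> \<nu> g x) * (w x * exp (g x))"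
  proof (rule mult_mono)
    show "0 \<le> x * hinv \<mu> \<nu> g x" using B V by (meson exp_ge_zero order_trans zero_le_mult_iff)
    show "0 \<le> w x * exp (-M)" using w by simp
    show "w x * exp (-M) \<le> w x * exp (g x)" using e1 w by (intro mult_left_mono) auto
  qed (use B in auto)
  moreover have "(x * hinv \<mu> \<nu> g x) * (w x * exp (g x)) \<le> (exp M * (\<bar>x\<bar> * W0 \<bar>x\<bar>)) * (w x * exp M)"
  proof (rule mult_mono)
    show "0 \<le> exp M * (\<bar>x\<bar> * W0 \<bar>x\<bar>)" using V by simp
    show "0 \<le> w x * exp (g x)" using w by simp
    show "w x * exp (g x) \<le> w x * exp M" using e1 w by (intro mult_left_mono) auto
  qed (use B in auto)
  moreover have "exp (-2*M) = exp (-M) * exp (-M)" "exp (2*M) = exp M * exp M"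
    by (simp_all add: exp_add[symmetric])
  ultimately show ?thesis unfolding P Q_def by (simp add: ac_simps)
qed

lemma P_diff:
  fixes g1 g2 :: "real \<Rightarrow> real" and M \<delta> :: real
  assumes gm1: "g1 \<in> borel_measurable borel" and gM1: "\<And>t. \<bar>g1 t\<bar> \<le> M"
    and gm2: "g2 \<in> borel_measurable borel" and gM2: "\<And>t. \<bar>g2 t\<bar> \<le> M"
    and d: "\<And>t. \<bar>g1 t - g2 t\<bar> \<le> \<delta>" and x: "x \<noteq> 0"
  shows "\<bar>P g1 x - P g2 x\<bar> \<le> 2 * exp (2*M) * \<delta> * Q x"
proof -
  note B2 = xhinv_bounds[OF gm2 gM2 x]
  note B1 = xhinv_bounds[OF gm1 gM1 x]
  have w: "0 < w x" using w_pos[OF x] .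
  have V: "0 \<le> \<bar>x\<bar> * W0 \<bar>x\<bar>" using W0_lo(3)[of "\<bar>x\<bar>"] x by simp
  have h2: "0 \<le> x * hinv \<mu> \<nu> g2 x"
    using B2 V by (meson exp_ge_zero order_trans zero_le_mult_iff)
  have a1: "w x * exp (g1 x) \<le> exp M * w x" using gM1[of x] w by simp
  have ad: "\<bar>w x * exp (g1 x) - w x * exp (g2 x)\<bar> \<le> exp M * \<delta> * w x"
  proof -
    have "\<bar>w x * exp (g1 x) - w x * exp (g2 x)\<bar> = w x * \<bar>exp (g1 x) - exp (g2 x)\<bar>"
      using w by (simp add: right_diff_distrib[symmetric] abs_mult)
    also have "\<dots> \<le> w x * (exp M * \<bar>g1 x - g2 x\<bar>)"
      using w exp_diff_le[OF gM1 gM2] by (intro mult_left_mono) auto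
    also have "\<dots> \<le> w x * (exp M * \<delta>)"
      using w d[of x] by (intro mult_left_mono) auto
    finally show ?thesis by (simp add: ac_simps)
  qed
  have "\<bar>(x * hinv \<mu> \<nu> g1 x) * (w x * exp (g1 x)) - (x * hinv \<mu> \<nu> g2 x) * (w x * exp (g2 x))\<bar>
     \<le> 2 * exp M * exp M * \<delta> * (\<bar>x\<bar> * W0 \<bar>x\<bar>) * w x"
    by (rule arith_prod[OF xhinv_diff[OF gm1 gM1 gm2 gM2 d x] h2 conjunct2[OF B2] _ a1 ad])
       (use w V in auto)
  moreover have "exp (2*M) = exp M * exp M" by (simp add: exp_add[symmetric])
  ultimately show ?thesis by (simp add: P_def hinvd_ww Q_def ac_simps)
qed

end

context PP begin

lemma P_meas:
  fixes g :: "real \<Rightarrow> real" and M :: real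
  assumes gm: "g \<in> borel_measurable borel" and gM: "\<And>t. \<bar>g t\<bar> \<le> M"
  shows "P g \<in> borel_measurable borel"
proof -
  note [measurable] = hinv_meas[OF gm gM] w_meas gm
  show ?thesis unfolding P_def hinvd_ext by measurable
qed

lemma Q_meas: "Q \<in> borel_measurable borel"
  unfolding Q_eq[abs_def] by (rule P_meas[of _ 0]) auto

definition R :: "real \<Rightarrow> real" where
  "R x = 1 / (\<bar>x\<bar> powr (2 * \<nu>) * (x\<^sup>2 + 1) powr (\<mu> - \<nu>))"

definition Ve :: "real \<Rightarrow> real" where
  "Ve x = \<bar>x\<bar> powr \<nu> * (x\<^sup>2 + 1) powr ((\<mu> - \<nu>) / 2)"

lemma sq1_pos[simp]: "0 < (x::real)\<^sup>2 + 1"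
  by (simp add: add_nonneg_pos)

lemma sq1_ne0[simp]: "(x::real)\<^sup>2 + 1 \<noteq> 0"
  using sq1_pos[of x] by linarith

lemma sq1_powr_pos[simp]: "0 < ((x::real)\<^sup>2 + 1) powr a"
proof -
  have "(x::real)\<^sup>2 + 1 \<noteq> 0" using sq1_pos[of x] by linarith
  then show ?thesis by simp
qed

lemma sq_powr: "(x::real) \<noteq> 0 \<Longrightarrow> (x\<^sup>2) powr b = \<bar>x\<bar> powr (2 * b)"
proof -
  assume x: "x \<noteq> 0"
  have eq: "x\<^sup>2 = \<bar>x\<bar> powr 2" using x by (simp add: powr_numeral)
  have "(x\<^sup>2) powr b = (\<bar>x\<bar> powr 2) powr b" by (simp only: eq)
  also have "\<dots> = \<bar>x\<bar> powr (2 * b)" by (rule powr_powr)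
  finally show ?thesis .
qed

lemma R_Ve: "R x = 1 / (Ve x)\<^sup>2"
proof -
  have "\<bar>x\<bar> powr (2 * \<nu>) = (\<bar>x\<bar> powr \<nu>)\<^sup>2"
    by (simp add: power2_eq_square powr_add[symmetric])
  moreover have "(x\<^sup>2 + 1) powr (\<mu> - \<nu>) = ((x\<^sup>2 + 1) powr ((\<mu> - \<nu>) / 2))\<^sup>2"
    by (simp add: power2_eq_square powr_add[symmetric])
  ultimately show ?thesis unfolding R_def Ve_def by (simp add: power_mult_distrib)
qed

lemma Q_Ve: "Q x = Ve x * W0 \<bar>x\<bar>"
proof (cases "x = 0")
  case True then show ?thesis by (simp add: Q_def Ve_def)
next
  case False
  have "\<bar>x\<bar> * \<bar>x\<bar> powr (\<nu> - 1) = \<bar>x\<bar> powr \<nu>"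
    using False by (simp add: powr_add[symmetric] powr_diff)
  have "Q x = (\<bar>x\<bar> * \<bar>x\<bar> powr (\<nu> - 1)) * (x\<^sup>2 + 1) powr ((\<mu> - \<nu>) / 2) * W0 \<bar>x\<bar>"
    unfolding Q_def ww_def by (simp only: ac_simps)
  also have "\<dots> = Ve x * W0 \<bar>x\<bar>" unfolding Ve_def by (simp only: \<open>\<bar>x\<bar> * \<bar>x\<bar> powr (\<nu> - 1) = \<bar>x\<bar> powr \<nu>\<close>)
  finally show ?thesis .
qed

lemma R_nonneg: "0 \<le> R x" by (simp add: R_def)

lemma R_0: "R 0 = 0" by (simp add: R_def)

lemma R_even: "R (-x) = R x" by (simp add: R_def)

lemma R_meas: "R \<in> borel_measurable borel"
  unfolding R_def by measurable

lemma R_le1: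
  assumes x: "x \<noteq> 0" shows "R x \<le> \<bar>x\<bar> powr (-2 * \<nu>)"
proof -
  have "1 \<le> (x\<^sup>2 + 1) powr (\<mu> - \<nu>)"
    using munu by (intro ge_one_powr_ge_zero) auto
  then have "\<bar>x\<bar> powr (2 * \<nu>) \<le> \<bar>x\<bar> powr (2 * \<nu>) * (x\<^sup>2 + 1) powr (\<mu> - \<nu>)"
    using mult_left_mono[of 1 _ "\<bar>x\<bar> powr (2 * \<nu>)"] by simp
  moreover have "0 < \<bar>x\<bar> powr (2 * \<nu>)" using x by simp
  ultimately have "R x \<le> 1 / \<bar>x\<bar> powr (2 * \<nu>)"
    unfolding R_def by (intro divide_left_mono) (auto simp: zero_less_mult_iff)
  also have "\<dots> = \<bar>x\<bar> powr (-2 * \<nu>)" by (simp add: powr_minus_divide)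
  finally show ?thesis .
qed

lemma R_le2:
  assumes x: "x \<noteq> 0" shows "R x \<le> \<bar>x\<bar> powr (-2 * \<mu>)"
proof -
  have "(x\<^sup>2) powr (\<mu> - \<nu>) \<le> (x\<^sup>2 + 1) powr (\<mu> - \<nu>)"
    using munu by (intro powr_mono2) auto
  then have "\<bar>x\<bar> powr (2 * (\<mu> - \<nu>)) \<le> (x\<^sup>2 + 1) powr (\<mu> - \<nu>)"
    using sq_powr[OF x] by simp
  then have "\<bar>x\<bar> powr (2 * \<nu>) * \<bar>x\<bar> powr (2 * (\<mu> - \<nu>)) \<le> \<bar>x\<bar> powr (2 * \<nu>) * (x\<^sup>2 + 1) powr (\<mu> - \<nu>)"
    by (intro mult_left_mono) auto
  moreover have "\<bar>x\<bar> powr (2 * \<nu>) * \<bar>x\<bar> powr (2 * (\<mu> - \<nu>)) = \<bar>x\<bar> powr (2 * \<mu>)"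
    by (simp add: powr_add[symmetric] algebra_simps)
  moreover have "0 < \<bar>x\<bar> powr (2 * \<mu>)" using x by simp
  ultimately have "R x \<le> 1 / \<bar>x\<bar> powr (2 * \<mu>)"
    unfolding R_def by (intro divide_left_mono) (auto simp: zero_less_mult_iff)
  also have "\<dots> = \<bar>x\<bar> powr (-2 * \<mu>)" by (simp add: powr_minus_divide)
  finally show ?thesis .
qed

definition C2 :: real where "C2 = 2 powr ((\<mu> - \<nu>) / 2) * (\<nu> + \<mu>)"

lemma C2_pos: "0 < C2" unfolding C2_def using nu0 mu by simp

lemma Ve_le:
  assumes x: "x \<noteq> 0" shows "Ve x \<le> C2 * W0 \<bar>x\<bar>"
proof (cases "\<bar>x\<bar> \<le> 1")
  case True
  have "\<bar>x\<bar>\<^sup>2 \<le> 1\<^sup>2" using True by (intro power_mono) auto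
  then have "x\<^sup>2 + 1 \<le> 2" by simp
  then have "(x\<^sup>2 + 1) powr ((\<mu> - \<nu>) / 2) \<le> 2 powr ((\<mu> - \<nu>) / 2)"
    using munu by (intro powr_mono2) auto
  then have "Ve x \<le> \<bar>x\<bar> powr \<nu> * 2 powr ((\<mu> - \<nu>) / 2)"
    unfolding Ve_def by (intro mult_left_mono) auto
  also have "\<dots> = 2 powr ((\<mu> - \<nu>) / 2) * \<nu> * (\<bar>x\<bar> powr \<nu> / \<nu>)" using nu0 by simp
  also have "\<dots> \<le> 2 powr ((\<mu> - \<nu>) / 2) * \<nu> * W0 \<bar>x\<bar>"
    using W0_lo(1)[of "\<bar>x\<bar>"] x nu0 by (intro mult_left_mono) auto
  also have "\<dots> \<le> C2 * W0 \<bar>x\<bar>"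
    unfolding C2_def using W0_lo(3)[of "\<bar>x\<bar>"] x mu nu0
    by (intro mult_right_mono mult_left_mono) auto
  finally show ?thesis .
next
  case False
  have e2: "2 * ((\<mu> - \<nu>) / 2) = \<mu> - \<nu>" by simp
  have "1\<^sup>2 \<le> \<bar>x\<bar>\<^sup>2" using False by (intro power_mono) auto
  then have "x\<^sup>2 + 1 \<le> 2 * x\<^sup>2" by simp
  then have "(x\<^sup>2 + 1) powr ((\<mu> - \<nu>) / 2) \<le> (2 * x\<^sup>2) powr ((\<mu> - \<nu>) / 2)"
    using munu by (intro powr_mono2) auto
  also have "\<dots> = 2 powr ((\<mu> - \<nu>) / 2) * \<bar>x\<bar> powr (\<mu> - \<nu>)"
    using sq_powr[OF x, of "(\<mu> - \<nu>) / 2", unfolded e2] by (simp add: powr_mult)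
  finally have "Ve x \<le> \<bar>x\<bar> powr \<nu> * (2 powr ((\<mu> - \<nu>) / 2) * \<bar>x\<bar> powr (\<mu> - \<nu>))"
    unfolding Ve_def by (intro mult_left_mono) auto
  also have "\<dots> = 2 powr ((\<mu> - \<nu>) / 2) * \<mu> * (\<bar>x\<bar> powr \<mu> / \<mu>)"
    using mu by (simp add: powr_add[symmetric])
  also have "\<dots> \<le> 2 powr ((\<mu> - \<nu>) / 2) * \<mu> * W0 \<bar>x\<bar>"
    using W0_lo(2)[of "\<bar>x\<bar>"] x mu by (intro mult_left_mono) auto
  also have "\<dots> \<le> C2 * W0 \<bar>x\<bar>"
    unfolding C2_def using W0_lo(3)[of "\<bar>x\<bar>"] x mu nu0
    by (intro mult_right_mono mult_left_mono) auto
  finally show ?thesis .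
qed

lemma invQ_le: "1 / Q x \<le> C2 * R x"
proof (cases "x = 0")
  case True then show ?thesis by (simp add: Q_def R_0)
next
  case False
  have V: "0 < Ve x" unfolding Ve_def using False by (simp add: zero_less_mult_iff)
  have W: "0 < W0 \<bar>x\<bar>" using W0_lo(3)[of "\<bar>x\<bar>"] False by simp
  have "Ve x * Ve x \<le> Ve x * (C2 * W0 \<bar>x\<bar>)" using Ve_le[OF False] V by (intro mult_left_mono) auto
  then have "1 / Q x \<le> C2 / (Ve x * Ve x)"
    using V W C2_pos unfolding Q_Ve by (simp add: field_simps)
  then show ?thesis by (simp add: R_Ve power2_eq_square)
qed

lemma R_le1': "0 < x \<Longrightarrow> R x \<le> x powr (-2 * \<nu>)"
  using R_le1[of x] by simp

lemma R_le2': "0 < x \<Longrightarrow> R x \<le> x powr (-2 * \<mu>)"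
  using R_le2[of x] by simp

lemma R_int_pos: "set_integrable lborel {0<..} R"
proof -
  have a: "set_integrable lborel {0<..<1} R"
  proof (rule set_integrable_bound[OF pow01(1)[of "-2*\<nu>" 1]])
    show "-1 < -2*\<nu>" using nu1 by simp
    show "set_borel_measurable lborel {0<..<1} R"
      unfolding set_borel_measurable_def using R_meas by measurable
    show "AE x in lborel. x \<in> {0<..<1} \<longrightarrow> norm (R x) \<le> norm (x powr (-2*\<nu>))"
      using R_le1' R_nonneg by (intro AE_I2) (auto simp: abs_of_nonneg)
  qed simp
  have b: "set_integrable lborel {1<..} R"
  proof (rule set_integrable_bound[OF powinf(1)[of "-2*\<mu>" 1]])
    show "-2*\<mu> < -1" using mu by simp
    show "set_borel_measurable lborel {1<..} R"
      unfolding set_borel_measurable_def using R_meas by measurable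
    show "AE x in lborel. x \<in> {1<..} \<longrightarrow> norm (R x) \<le> norm (x powr (-2*\<mu>))"
      using R_le2' R_nonneg by (intro AE_I2) (auto simp: abs_of_nonneg)
  qed simp
  have "set_integrable lborel ({0<..<1} \<union> {1<..}) R"
    using a b by (intro set_integrable_Un) auto
  moreover have "set_integrable lborel ({0<..<1} \<union> {1<..}) R \<longleftrightarrow> set_integrable lborel {0<..} R"
    by (rule set_integrable_discrete_difference[where X="{1}"]) auto
  ultimately show ?thesis by simp
qed

lemma R_int_UNIV: "set_integrable lborel UNIV R"
proof -
  have e: "{x. - x \<in> {0<..}} = {..<(0::real)}" by auto
  have n: "set_integrable lborel {..<0} R"
    using set_integrable_reflect[OF R_int_pos, unfolded e R_even] .
  have "set_integrable lborel ({..<0} \<union> {0<..}) R"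
    using n R_int_pos by (intro set_integrable_Un) auto
  moreover have "set_integrable lborel ({..<0} \<union> {0<..}) R \<longleftrightarrow> set_integrable lborel UNIV R"
    by (rule set_integrable_discrete_difference[where X="{0}"]) auto
  ultimately show ?thesis by simp
qed

lemma R_int: "integrable lborel R"
  using R_int_UNIV unfolding set_integrable_def by simp

lemma R_int_on: "S \<in> sets lborel \<Longrightarrow> set_integrable lborel S R"
  using R_int_UNIV by (rule set_integrable_subset) auto

lemma R_tail_right:
  assumes b: "0 < b"
  shows "(LBINT t:{b<..}. R t) \<le> b powr (1 - 2*\<mu>) / (2*\<mu> - 1)"
proof -
  have p: "-2*\<mu> < -1" using mu by simp
  have "(LBINT t:{b<..}. R t) \<le> (LBINT t:{b<..}. t powr (-2*\<mu>))"
    using R_le2' b by (intro set_integral_mono[OF R_int_on powinf(1)[OF p b]]) auto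
  also have "\<dots> = b powr (1 - 2*\<mu>) / (2*\<mu> - 1)"
    using powinf(2)[OF p b] mu by (simp add: field_simps)
  finally show ?thesis .
qed

lemma R_tail_left:
  assumes b: "0 < b"
  shows "(LBINT t:{..-b}. R t) \<le> b powr (1 - 2*\<mu>) / (2*\<mu> - 1)"
proof -
  have e: "{x. - x \<in> {..-b}} = {b..}" by auto
  have "(LBINT t:{..-b}. R t) = (LBINT t:{b..}. R t)"
    by (subst set_integral_reflect) (simp only: e R_even)
  also have "\<dots> = (LBINT t:{b<..}. R t)"
    by (rule set_integral_discrete_difference[where X="{b}"]) auto
  finally show ?thesis using R_tail_right[OF b] by simp
qed

definition SR :: real where "SR = (LBINT t. R t)"

lemma R_on_le: "S \<in> sets lborel \<Longrightarrow> (LBINT t:S. R t) \<le> SR"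
proof -
  assume S: "S \<in> sets lborel"
  have "(LBINT t:S. R t) \<le> (LBINT t:UNIV. R t)"
    using S R_nonneg by (intro set_integral_subset_mono[OF R_int_UNIV]) auto
  then show ?thesis unfolding SR_def set_lebesgue_integral_def by simp
qed

lemma SR_nonneg: "0 \<le> SR"
  unfolding SR_def using R_nonneg by simp

end

lemma arith_inv:
  fixes a Q p1 p2 D :: real
  assumes a: "0 < a" and Q: "0 < Q" and p1: "a*Q \<le> p1" and p2: "a*Q \<le> p2" and d: "\<bar>p1 - p2\<bar> \<le> D*Q"
  shows "\<bar>1/p1 - 1/p2\<bar> \<le> D / (a*a*Q)"
proof -
  have aQ: "0 < a*Q" using a Q by simp
  have pp1: "0 < p1" "0 < p2" using aQ p1 p2 by linarith+
  have "\<bar>1/p1 - 1/p2\<bar> = \<bar>p1 - p2\<bar> / (p1*p2)"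
    using pp1 by (simp add: field_simps abs_minus_commute)
  also have "\<dots> \<le> (D*Q) / (p1*p2)"
    using pp1 d by (intro divide_right_mono) auto
  also have "\<dots> \<le> (D*Q) / ((a*Q)*(a*Q))"
  proof (rule divide_left_mono)
    show "0 \<le> D*Q" using d abs_ge_zero order_trans by blast
    show "(a*Q)*(a*Q) \<le> p1*p2" using aQ p1 p2 by (intro mult_mono) auto
    show "0 < p1*p2 * ((a*Q)*(a*Q))" using pp1 aQ by simp
  qed
  also have "\<dots> = D / (a*a*Q)" using a Q by (simp add: field_simps)
  finally show ?thesis .
qed

context PP begin

lemma P_0: "P g 0 = 0" by (simp add: P_def)

lemma Q_0: "Q 0 = 0" by (simp add: Q_def)

lemma invP_bounds:
  fixes g :: "real \<Rightarrow> real" and M :: real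
  assumes gm: "g \<in> borel_measurable borel" and gM: "\<And>t. \<bar>g t\<bar> \<le> M"
  shows "exp (-2*M) * (1 / Q x) \<le> 1 / P g x \<and> 1 / P g x \<le> exp (2*M) * (1 / Q x)"
proof (cases "x = 0")
  case True then show ?thesis by (simp add: P_0 Q_0)
next
  case False
  note B = P_bounds[OF gm gM False]
  have Q: "0 < Q x" by (rule Q_pos[OF False])
  have lo: "0 < exp (-2*M) * Q x" using Q by simp
  have Pp: "0 < P g x" using B lo by linarith
  have "1 / P g x \<le> 1 / (exp (-2*M) * Q x)"
    using B lo by (intro divide_left_mono) auto
  also have "\<dots> = exp (2*M) * (1 / Q x)" by (simp add: exp_minus field_simps)
  finally have 1: "1 / P g x \<le> exp (2*M) * (1 / Q x)" .
  have "1 / (exp (2*M) * Q x) \<le> 1 / P g x"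
    using B Pp by (intro divide_left_mono) auto
  moreover have "1 / (exp (2*M) * Q x) = exp (-2*M) * (1 / Q x)" by (simp add: exp_minus field_simps)
  ultimately show ?thesis using 1 by simp
qed

lemma invP_diff:
  fixes g1 g2 :: "real \<Rightarrow> real" and M \<delta> :: real
  assumes gm1: "g1 \<in> borel_measurable borel" and gM1: "\<And>t. \<bar>g1 t\<bar> \<le> M"
    and gm2: "g2 \<in> borel_measurable borel" and gM2: "\<And>t. \<bar>g2 t\<bar> \<le> M"
    and d: "\<And>t. \<bar>g1 t - g2 t\<bar> \<le> \<delta>"
  shows "\<bar>1 / P g1 x - 1 / P g2 x\<bar> \<le> 2 * exp (6*M) * \<delta> * (1 / Q x)"
proof (cases "x = 0")
  case True then show ?thesis by (simp add: P_0 Q_0)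
next
  case False
  have "\<bar>1 / P g1 x - 1 / P g2 x\<bar> \<le> (2 * exp (2*M) * \<delta>) / (exp (-2*M) * exp (-2*M) * Q x)"
    using P_bounds[OF gm1 gM1 False] P_bounds[OF gm2 gM2 False] P_diff[OF gm1 gM1 gm2 gM2 d False]
    by (intro arith_inv Q_pos[OF False]) (auto simp: mult.commute)
  also have "\<dots> = 2 * exp (6*M) * \<delta> * (1 / Q x)"
  proof -
    have "exp (6*M) = exp (2*M) * exp (2*M) * exp (2*M)" by (simp add: exp_add[symmetric])
    moreover have "exp (-2*M) * exp (2*M) = 1" by (simp add: exp_add[symmetric])
    ultimately show ?thesis using Q_pos[OF False] by (simp add: field_simps)
  qed
  finally show ?thesis .
qed

definition J :: real where "J = (LBINT x. 1 / Q x)"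

lemma invQ_nonneg: "0 \<le> 1 / Q x"
  using Q_pos[of x] Q_0 by (cases "x = 0") auto

lemma invQ_meas: "(\<lambda>x. 1 / Q x) \<in> borel_measurable borel"
  using Q_meas by measurable

lemma invQ_int: "integrable lborel (\<lambda>x. 1 / Q x)"
proof (rule Bochner_Integration.integrable_bound)
  show "integrable lborel (\<lambda>x. C2 * R x)" using R_int by simp
  show "(\<lambda>x. 1 / Q x) \<in> borel_measurable lborel" using invQ_meas by simp
  show "AE x in lborel. norm (1 / Q x) \<le> norm (C2 * R x)"
    using invQ_le invQ_nonneg R_nonneg C2_pos by (intro AE_I2) (auto simp: abs_of_nonneg)
qed

lemma invQ_int_c: "integrable lborel (\<lambda>x. c / Q x)"
  using integrable_mult_right[OF invQ_int, of c] by simp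

lemma intQ_c: "(LBINT x. c / Q x) = c * J"
proof -
  have "(LBINT x. c / Q x) = (LBINT x. c * (1 / Q x))" by simp
  also have "\<dots> = c * (LBINT x. 1 / Q x)" by (rule integral_mult_right_zero)
  finally show ?thesis unfolding J_def .
qed

lemma J_pos: "0 < J"
proof -
  have "0 \<le> J" unfolding J_def using invQ_nonneg by simp
  moreover have "J \<noteq> 0"
  proof
    assume "J = 0"
    then have "AE x in lborel. 1 / Q x = 0"
      using integral_nonneg_eq_0_iff_AE[OF invQ_int] invQ_nonneg unfolding J_def by simp
    moreover have "AE x in lborel. (x::real) \<noteq> 0" by (rule AE_lborel_singleton)
    ultimately have "AE x in lborel. 1 / Q x = 0 \<and> x \<noteq> 0" by (rule eventually_conj)
    then have "AE (x::real) in lborel. False"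
    proof (rule eventually_mono)
      fix x :: real assume "1 / Q x = 0 \<and> x \<noteq> 0"
      then show False using Q_pos[of x] by simp
    qed
    then have "UNIV \<in> null_sets (lborel::real measure)"
      using AE_iff_null[of "lborel::real measure" "\<lambda>_. False"] by simp
    then have "emeasure (lborel::real measure) UNIV = 0" by auto
    then show False by simp
  qed
  ultimately show ?thesis by simp
qed

lemma invP_meas:
  fixes g :: "real \<Rightarrow> real" and M :: real
  assumes gm: "g \<in> borel_measurable borel" and gM: "\<And>t. \<bar>g t\<bar> \<le> M"
  shows "(\<lambda>x. 1 / P g x) \<in> borel_measurable borel"
  using P_meas[OF gm gM] by measurable

lemma invP_int:
  fixes g :: "real \<Rightarrow> real" and M :: real
  assumes gm: "g \<in> borel_measurable borel" and gM: "\<And>t. \<bar>g t\<bar> \<le> M"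
  shows "integrable lborel (\<lambda>x. 1 / P g x)"
proof (rule Bochner_Integration.integrable_bound)
  show "integrable lborel (\<lambda>x. exp (2*M) * (1 / Q x))" using invQ_int_c by simp
  show "(\<lambda>x. 1 / P g x) \<in> borel_measurable lborel" using invP_meas[OF gm gM] by simp
  show "AE x in lborel. norm (1 / P g x) \<le> norm (exp (2*M) * (1 / Q x))"
  proof (intro AE_I2)
    fix x
    note b = invP_bounds[OF gm gM, of x]
    have "0 \<le> exp (-2*M) * (1 / Q x)" using invQ_nonneg by simp
    then have nn: "0 \<le> 1 / P g x" using b by linarith
    have nn2: "0 \<le> exp (2*M) * (1 / Q x)" using invQ_nonneg by simp
    have "norm (1 / P g x) = 1 / P g x" using nn by (simp only: real_norm_def abs_of_nonneg)
    moreover have "norm (exp (2*M) * (1 / Q x)) = exp (2*M) * (1 / Q x)"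
      using nn2 by (simp only: real_norm_def abs_of_nonneg)
    ultimately show "norm (1 / P g x) \<le> norm (exp (2*M) * (1 / Q x))"
      using b by simp
  qed
qed

lemma I_lo:
  fixes g :: "real \<Rightarrow> real" and M :: real
  assumes gm: "g \<in> borel_measurable borel" and gM: "\<And>t. \<bar>g t\<bar> \<le> M"
  shows "exp (-2*M) * J \<le> (LBINT x. 1 / P g x)"
proof -
  have "(LBINT x. exp (-2*M) * (1 / Q x)) \<le> (LBINT x. 1 / P g x)"
    using invP_bounds[OF gm gM] invQ_int_c invP_int[OF gm gM] by (intro integral_mono) auto
  then show ?thesis by (simp add: intQ_c)
qed

lemma I_diff:
  fixes g1 g2 :: "real \<Rightarrow> real" and M \<delta> :: real
  assumes gm1: "g1 \<in> borel_measurable borel" and gM1: "\<And>t. \<bar>g1 t\<bar> \<le> M"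
    and gm2: "g2 \<in> borel_measurable borel" and gM2: "\<And>t. \<bar>g2 t\<bar> \<le> M"
    and d: "\<And>t. \<bar>g1 t - g2 t\<bar> \<le> \<delta>"
  shows "\<bar>(LBINT x. 1 / P g1 x) - (LBINT x. 1 / P g2 x)\<bar> \<le> 2 * exp (6*M) * \<delta> * J"
proof -
  have i1: "integrable lborel (\<lambda>x. 1 / P g1 x)" by (rule invP_int[OF gm1 gM1])
  have i2: "integrable lborel (\<lambda>x. 1 / P g2 x)" by (rule invP_int[OF gm2 gM2])
  have "\<bar>(LBINT x. 1 / P g1 x) - (LBINT x. 1 / P g2 x)\<bar> = \<bar>LBINT x. 1 / P g1 x - 1 / P g2 x\<bar>"
    using i1 i2 by simp
  also have "\<dots> \<le> (LBINT x. 2 * exp (6*M) * \<delta> * (1 / Q x))"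
    using i1 i2 invQ_int_c invP_diff[OF gm1 gM1 gm2 gM2 d]
    by (intro integral_abs_bound_integral) auto
  also have "\<dots> = 2 * exp (6*M) * \<delta> * J" by (simp add: intQ_c)
  finally show ?thesis .
qed

end




lemma set_diff_bound:
  fixes f1 f2 h :: "real \<Rightarrow> real" and c :: real
  assumes i1: "integrable lborel f1" and i2: "integrable lborel f2" and ih: "integrable lborel h"
    and S: "S \<in> sets lborel" and b: "\<And>t. \<bar>f1 t - f2 t\<bar> \<le> c * h t"
  shows "\<bar>(LBINT t:S. f1 t) - (LBINT t:S. f2 t)\<bar> \<le> c * (LBINT t:S. h t)"
proof -
  have j1: "integrable lborel (\<lambda>t. indicator S t *\<^sub>R f1 t)" using S i1 by (rule integrable_mult_indicator)
  have j2: "integrable lborel (\<lambda>t. indicator S t *\<^sub>R f2 t)" using S i2 by (rule integrable_mult_indicator)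
  have jh: "integrable lborel (\<lambda>t. indicator S t *\<^sub>R (c * h t))"
    using S integrable_mult_right[OF ih, of c] by (rule integrable_mult_indicator)
  have "\<bar>(LBINT t:S. f1 t) - (LBINT t:S. f2 t)\<bar>
      = \<bar>LBINT t. indicator S t *\<^sub>R f1 t - indicator S t *\<^sub>R f2 t\<bar>"
    unfolding set_lebesgue_integral_def using j1 j2 by simp
  also have "\<dots> \<le> (LBINT t. indicator S t *\<^sub>R (c * h t))"
  proof (rule integral_abs_bound_integral)
    show "integrable lborel (\<lambda>t. indicator S t *\<^sub>R f1 t - indicator S t *\<^sub>R f2 t)"
      using j1 j2 by simp
    show "integrable lborel (\<lambda>t. indicator S t *\<^sub>R (c * h t))" by (rule jh)
    fix t :: real
    show "\<bar>indicator S t *\<^sub>R f1 t - indicator S t *\<^sub>R f2 t\<bar> \<le> indicator S t *\<^sub>R (c * h t)"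
      using b[of t] by (simp add: indicator_def)
  qed
  also have "\<dots> = c * (LBINT t:S. h t)"
    unfolding set_lebesgue_integral_def by (simp add: mult.left_commute)
  finally show ?thesis .
qed

context PP begin

definition C0 :: real where "C0 = (\<mu> - \<nu>) * pi"

lemma C0_pos: "0 < C0" unfolding C0_def using munu by simp

lemma kappa_eq: "kappa \<mu> \<nu> g = C0 / (LBINT x. 1 / P g x)"
  unfolding kappa_def C0_def P_def by simp

lemma Fd_eq: "Fd \<mu> \<nu> g x = kappa \<mu> \<nu> g * (1 / P g x)"
  unfolding Fd_def P_def by simp

lemma M_nonneg: "(\<And>t. \<bar>g t\<bar> \<le> M) \<Longrightarrow> 0 \<le> (M::real)"
  using abs_ge_zero order_trans by blast

lemma kappa_bounds:
  fixes g :: "real \<Rightarrow> real" and M :: real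
  assumes gm: "g \<in> borel_measurable borel" and gM: "\<And>t. \<bar>g t\<bar> \<le> M"
  shows "0 \<le> kappa \<mu> \<nu> g \<and> kappa \<mu> \<nu> g \<le> exp (2*M) * (C0 / J)"
proof -
  have lo: "exp (-2*M) * J \<le> (LBINT x. 1 / P g x)" by (rule I_lo[OF gm gM])
  have pos: "0 < exp (-2*M) * J" using J_pos by simp
  have "C0 / (LBINT x. 1 / P g x) \<le> C0 / (exp (-2*M) * J)"
    using lo pos C0_pos by (intro divide_left_mono) auto
  also have "\<dots> = exp (2*M) * (C0 / J)" by (simp add: exp_minus field_simps)
  finally show ?thesis unfolding kappa_eq using lo pos C0_pos by simp
qed

lemma kappa_diff:
  fixes g1 g2 :: "real \<Rightarrow> real" and M \<delta> :: real
  assumes gm1: "g1 \<in> borel_measurable borel" and gM1: "\<And>t. \<bar>g1 t\<bar> \<le> M"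
    and gm2: "g2 \<in> borel_measurable borel" and gM2: "\<And>t. \<bar>g2 t\<bar> \<le> M"
    and d: "\<And>t. \<bar>g1 t - g2 t\<bar> \<le> \<delta>"
  shows "\<bar>kappa \<mu> \<nu> g1 - kappa \<mu> \<nu> g2\<bar> \<le> 2 * exp (10*M) * \<delta> * (C0 / J)"
proof -
  have "\<bar>1 / (LBINT x. 1 / P g1 x) - 1 / (LBINT x. 1 / P g2 x)\<bar>
      \<le> (2 * exp (6*M) * \<delta>) / (exp (-2*M) * exp (-2*M) * J)"
    using I_lo[OF gm1 gM1] I_lo[OF gm2 gM2] I_diff[OF gm1 gM1 gm2 gM2 d]
    by (intro arith_inv J_pos) (auto simp: mult.commute)
  also have "\<dots> = 2 * exp (10*M) * \<delta> * (1 / J)"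
  proof -
    have q: "exp (-2*M) * exp (-2*M) * exp (10*M) = exp (6*M)"
      by (simp add: exp_add[symmetric] algebra_simps)
    have "(2 * exp (6*M) * \<delta>) / (exp (-2*M) * exp (-2*M) * J)
        = (2 * (exp (-2*M) * exp (-2*M) * exp (10*M)) * \<delta>) / (exp (-2*M) * exp (-2*M) * J)"
      by (simp only: q)
    also have "\<dots> = 2 * exp (10*M) * \<delta> * (1 / J)" using J_pos by (simp add: field_simps)
    finally show ?thesis .
  qed
  finally have 1: "\<bar>1 / (LBINT x. 1 / P g1 x) - 1 / (LBINT x. 1 / P g2 x)\<bar> \<le> 2 * exp (10*M) * \<delta> * (1 / J)" .
  have "\<bar>kappa \<mu> \<nu> g1 - kappa \<mu> \<nu> g2\<bar> = C0 * \<bar>1 / (LBINT x. 1 / P g1 x) - 1 / (LBINT x. 1 / P g2 x)\<bar>"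
  proof -
    have e: "C0 / a - C0 / b = C0 * (1 / a - 1 / b)" for a b :: real by (simp add: right_diff_distrib)
    show ?thesis unfolding kappa_eq e abs_mult using C0_pos by simp
  qed
  also have "\<dots> \<le> C0 * (2 * exp (10*M) * \<delta> * (1 / J))"
    using 1 C0_pos by (intro mult_left_mono) auto
  finally show ?thesis by (simp add: ac_simps)
qed

definition K :: "real \<Rightarrow> real" where "K M = 8 * exp (20*M) * (C0 / J) * C2"

lemma K_pos: "0 < K M" unfolding K_def using C0_pos J_pos C2_pos by simp

lemma Fd_diff:
  fixes g1 g2 :: "real \<Rightarrow> real" and M \<delta> :: real
  assumes gm1: "g1 \<in> borel_measurable borel" and gM1: "\<And>t. \<bar>g1 t\<bar> \<le> M"
    and gm2: "g2 \<in> borel_measurable borel" and gM2: "\<And>t. \<bar>g2 t\<bar> \<le> M"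
    and d: "\<And>t. \<bar>g1 t - g2 t\<bar> \<le> \<delta>"
  shows "\<bar>Fd \<mu> \<nu> g1 x - Fd \<mu> \<nu> g2 x\<bar> \<le> K M * \<delta> * R x"
proof -
  have M0: "0 \<le> M" by (rule M_nonneg[OF gM1])
  have d0: "0 \<le> \<delta>" using d[of 0] by linarith
  define E where "E = 2 * exp (10*M)"
  have E0: "0 \<le> E" unfolding E_def by simp
  have e2: "exp (2*M) \<le> E" unfolding E_def using M0
    by (smt (verit, best) exp_gt_zero exp_le_cancel_iff)
  have e6: "2 * exp (6*M) \<le> E" unfolding E_def using M0 by simp
  have V: "0 \<le> C0 / J" using C0_pos J_pos by simp
  note kb2 = kappa_bounds[OF gm2 gM2]
  note ub1 = invP_bounds[OF gm1 gM1, of x]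
  have u1: "0 \<le> 1 / P g1 x"
    using ub1 invQ_nonneg[of x] by (smt (verit) exp_gt_zero mult_nonneg_nonneg)
  have "\<bar>kappa \<mu> \<nu> g1 * (1 / P g1 x) - kappa \<mu> \<nu> g2 * (1 / P g2 x)\<bar> \<le> 2 * E * E * \<delta> * (C0 / J) * (1 / Q x)"
  proof (rule arith_prod)
    show "\<bar>kappa \<mu> \<nu> g1 - kappa \<mu> \<nu> g2\<bar> \<le> E * \<delta> * (C0 / J)"
      using kappa_diff[OF gm1 gM1 gm2 gM2 d] unfolding E_def by simp
    show "0 \<le> kappa \<mu> \<nu> g2" using kb2 by simp
    show "kappa \<mu> \<nu> g2 \<le> E * (C0 / J)"
      using kb2 e2 V by (meson mult_right_mono order_trans)
    show "0 \<le> 1 / P g1 x" by (rule u1)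
    show "1 / P g1 x \<le> E * (1 / Q x)"
      using ub1 e2 invQ_nonneg[of x] by (meson mult_right_mono order_trans)
    show "\<bar>1 / P g1 x - 1 / P g2 x\<bar> \<le> E * \<delta> * (1 / Q x)"
      using invP_diff[OF gm1 gM1 gm2 gM2 d, of x] e6 d0 invQ_nonneg[of x]
      by (smt (verit, best) mult_right_mono mult_nonneg_nonneg)
  qed (use E0 V invQ_nonneg in auto)
  also have "\<dots> \<le> 2 * E * E * \<delta> * (C0 / J) * (C2 * R x)"
    using invQ_le[of x] E0 d0 V by (intro mult_left_mono) (auto simp del: times_divide_eq_right)
  also have "\<dots> = K M * \<delta> * R x"
    unfolding K_def E_def
  proof -
    have "exp (20*M) = exp (10*M) * exp (10*M)" by (simp add: exp_add[symmetric])
    then show "2 * (2 * exp (10 * M)) * (2 * exp (10 * M)) * \<delta> * (C0 / J) * (C2 * R x) =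
      8 * exp (20 * M) * (C0 / J) * C2 * \<delta> * R x" by (simp add: ac_simps)
  qed
  finally show ?thesis unfolding Fd_eq .
qed

lemma Fd_int:
  fixes g :: "real \<Rightarrow> real" and M :: real
  assumes gm: "g \<in> borel_measurable borel" and gM: "\<And>t. \<bar>g t\<bar> \<le> M"
  shows "integrable lborel (Fd \<mu> \<nu> g)"
proof -
  have "Fd \<mu> \<nu> g = (\<lambda>x. kappa \<mu> \<nu> g * (1 / P g x))" by (rule ext) (rule Fd_eq)
  then show ?thesis using integrable_mult_right[OF invP_int[OF gm gM]] by simp
qed

lemma Fd_total:
  fixes g :: "real \<Rightarrow> real" and M :: real
  assumes gm: "g \<in> borel_measurable borel" and gM: "\<And>t. \<bar>g t\<bar> \<le> M"
  shows "(LBINT x. Fd \<mu> \<nu> g x) = C0"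
proof -
  have pos: "0 < (LBINT x. 1 / P g x)"
    using I_lo[OF gm gM] J_pos by (smt (verit) exp_gt_zero mult_pos_pos)
  have "(LBINT x. Fd \<mu> \<nu> g x) = (LBINT x. kappa \<mu> \<nu> g * (1 / P g x))" by (simp only: Fd_eq)
  also have "\<dots> = kappa \<mu> \<nu> g * (LBINT x. 1 / P g x)" by (rule integral_mult_right_zero)
  also have "\<dots> = C0" unfolding kappa_eq using pos by simp
  finally show ?thesis .
qed

lemma FF_diff_gen:
  fixes g1 g2 :: "real \<Rightarrow> real" and M \<delta> :: real
  assumes gm1: "g1 \<in> borel_measurable borel" and gM1: "\<And>t. \<bar>g1 t\<bar> \<le> M"
    and gm2: "g2 \<in> borel_measurable borel" and gM2: "\<And>t. \<bar>g2 t\<bar> \<le> M"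
    and d: "\<And>t. \<bar>g1 t - g2 t\<bar> \<le> \<delta>"
  shows "\<bar>FF \<mu> \<nu> g1 x - FF \<mu> \<nu> g2 x\<bar> \<le> K M * \<delta> * (LBINT t:{x<..}. R t)"
proof -
  have "\<bar>(LBINT t:{x<..}. Fd \<mu> \<nu> g1 t) - (LBINT t:{x<..}. Fd \<mu> \<nu> g2 t)\<bar> \<le> (K M * \<delta>) * (LBINT t:{x<..}. R t)"
    by (rule set_diff_bound[OF Fd_int[OF gm1 gM1] Fd_int[OF gm2 gM2] R_int])
       (use Fd_diff[OF gm1 gM1 gm2 gM2 d] in auto)
  then show ?thesis unfolding FF_def by (simp add: abs_minus_commute)
qed

lemma FF_left_eq:
  fixes g :: "real \<Rightarrow> real" and M :: real
  assumes gm: "g \<in> borel_measurable borel" and gM: "\<And>t. \<bar>g t\<bar> \<le> M"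
  shows "FF \<mu> \<nu> g x = (LBINT t:{..x}. Fd \<mu> \<nu> g t) - C0"
proof -
  have i: "integrable lborel (Fd \<mu> \<nu> g)" by (rule Fd_int[OF gm gM])
  have si: "set_integrable lborel S (Fd \<mu> \<nu> g)" if "S \<in> sets lborel" for S
    using i that unfolding set_integrable_def by (intro integrable_mult_indicator) auto
  have "C0 = (LBINT t:UNIV. Fd \<mu> \<nu> g t)"
    using Fd_total[OF gm gM] i set_integral_space[OF i] by simp
  also have "UNIV = {..x} \<union> {x<..}" by auto
  also have "(LBINT t:{..x} \<union> {x<..}. Fd \<mu> \<nu> g t) = (LBINT t:{..x}. Fd \<mu> \<nu> g t) + (LBINT t:{x<..}. Fd \<mu> \<nu> g t)"
    by (rule set_integral_Un) (auto intro: si)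
  finally show ?thesis unfolding FF_def by simp
qed

lemma FF_diff_left:
  fixes g1 g2 :: "real \<Rightarrow> real" and M \<delta> :: real
  assumes gm1: "g1 \<in> borel_measurable borel" and gM1: "\<And>t. \<bar>g1 t\<bar> \<le> M"
    and gm2: "g2 \<in> borel_measurable borel" and gM2: "\<And>t. \<bar>g2 t\<bar> \<le> M"
    and d: "\<And>t. \<bar>g1 t - g2 t\<bar> \<le> \<delta>"
  shows "\<bar>FF \<mu> \<nu> g1 x - FF \<mu> \<nu> g2 x\<bar> \<le> K M * \<delta> * (LBINT t:{..x}. R t)"
proof -
  have "\<bar>(LBINT t:{..x}. Fd \<mu> \<nu> g1 t) - (LBINT t:{..x}. Fd \<mu> \<nu> g2 t)\<bar> \<le> (K M * \<delta>) * (LBINT t:{..x}. R t)"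
    by (rule set_diff_bound[OF Fd_int[OF gm1 gM1] Fd_int[OF gm2 gM2] R_int])
       (use Fd_diff[OF gm1 gM1 gm2 gM2 d] in auto)
  then show ?thesis unfolding FF_left_eq[OF gm1 gM1] FF_left_eq[OF gm2 gM2] by simp
qed

end

lemma inX_facts:
  assumes "inX g"
  shows "g \<in> borel_measurable borel" "\<exists>B. \<forall>x. \<bar>g x\<bar> \<le> B"
proof -
  show "g \<in> borel_measurable borel" using assms unfolding inX_def
    by (intro borel_measurable_continuous_onI) auto
  have "bounded (range g)" using assms unfolding inX_def by auto
  then obtain B where "\<forall>y\<in>range g. norm y \<le> B" unfolding bounded_iff by auto
  then show "\<exists>B. \<forall>x. \<bar>g x\<bar> \<le> B" by auto
qed

lemma supnorm_le:
  assumes "\<And>x. \<bar>g x\<bar> \<le> B"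
  shows "\<bar>g t\<bar> \<le> supnorm g"
  unfolding supnorm_def
  by (rule cSUP_upper) (auto intro!: bdd_aboveI2 assms)

theorem lemma5p5:
  fixes \<mu> \<nu> M :: real
  assumes "\<mu> > 1/2" and "0 < \<nu>" and "\<nu> < 1/2" and "M > 0"
  shows "\<exists>c>0. \<forall>g1 g2. inX g1 \<longrightarrow> inX g2 \<longrightarrow> supnorm g1 \<le> M \<longrightarrow> supnorm g2 \<le> M \<longrightarrow>
     (\<forall>x. x \<noteq> 0 \<longrightarrow> \<bar>Fd \<mu> \<nu> g1 x - Fd \<mu> \<nu> g2 x\<bar>
        \<le> c * supnorm (\<lambda>t. g2 t - g1 t) * (1 / (\<bar>x\<bar> powr (2 * \<nu>) * (x\<^sup>2 + 1) powr (\<mu> - \<nu>)))) \<and>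
     (\<forall>x. \<bar>x\<bar> \<ge> 1 \<longrightarrow> \<bar>FF \<mu> \<nu> g1 x - FF \<mu> \<nu> g2 x\<bar>
        \<le> c * supnorm (\<lambda>t. g2 t - g1 t) * \<bar>x\<bar> powr (1 - 2 * \<mu>)) \<and>
     (\<forall>x. \<bar>FF \<mu> \<nu> g1 x - FF \<mu> \<nu> g2 x\<bar> \<le> c * supnorm (\<lambda>t. g2 t - g1 t))"
proof -
  interpret PP \<mu> \<nu> using assms by unfold_locales auto
  define c where "c = K M * (1 + SR + 1 / (2*\<mu> - 1))"
  have m1: "0 < 2*\<mu> - 1" using assms by simp
  have KM: "0 < K M" by (rule K_pos)
  have "0 < 1 / (2*\<mu> - 1)" using m1 by simp
  then have p: "0 < 1 + SR + 1 / (2*\<mu> - 1)" using SR_nonneg by linarith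
  have c_pos: "0 < c" unfolding c_def using KM p by simp
  have cK: "K M \<le> c" unfolding c_def using KM SR_nonneg m1
    by (simp add: mult_le_cancel_left1 add_nonneg_nonneg)
  have cKS: "K M * SR \<le> c" unfolding c_def using KM SR_nonneg m1
    by (intro mult_left_mono) auto
  have cKm: "K M * (1 / (2*\<mu> - 1)) \<le> c" unfolding c_def using KM SR_nonneg m1
    by (intro mult_left_mono) auto
  show ?thesis
  proof (rule exI[of _ c], rule conjI[OF c_pos], intro allI impI)
    fix g1 g2 assume X1: "inX g1" and X2: "inX g2" and S1: "supnorm g1 \<le> M" and S2: "supnorm g2 \<le> M"
    note F1 = inX_facts[OF X1] and F2 = inX_facts[OF X2]
    obtain B1 where B1: "\<And>x. \<bar>g1 x\<bar> \<le> B1" using F1(2) by auto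
    obtain B2 where B2: "\<And>x. \<bar>g2 x\<bar> \<le> B2" using F2(2) by auto
    have gM1: "\<bar>g1 t\<bar> \<le> M" for t using supnorm_le[where g=g1 and B=B1 and t=t, OF B1] S1 by simp
    have gM2: "\<bar>g2 t\<bar> \<le> M" for t using supnorm_le[where g=g2 and B=B2 and t=t, OF B2] S2 by simp
    define \<delta> where "\<delta> = supnorm (\<lambda>t. g2 t - g1 t)"
    have d: "\<bar>g1 t - g2 t\<bar> \<le> \<delta>" for t
    proof -
      have "\<bar>g2 x - g1 x\<bar> \<le> B2 + B1" for x using B1[of x] B2[of x] by simp
      from supnorm_le[where g="\<lambda>t. g2 t - g1 t" and B="B2+B1" and t=t, OF this] show ?thesis
        unfolding \<delta>_def by (simp add: abs_minus_commute)
    qed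
    have d0: "0 \<le> \<delta>" using d[of 0] by linarith
    note gm1 = F1(1) and gm2 = F2(1)
    show "(\<forall>x. x \<noteq> 0 \<longrightarrow> \<bar>Fd \<mu> \<nu> g1 x - Fd \<mu> \<nu> g2 x\<bar>
        \<le> c * supnorm (\<lambda>t. g2 t - g1 t) * (1 / (\<bar>x\<bar> powr (2 * \<nu>) * (x\<^sup>2 + 1) powr (\<mu> - \<nu>)))) \<and>
     (\<forall>x. \<bar>x\<bar> \<ge> 1 \<longrightarrow> \<bar>FF \<mu> \<nu> g1 x - FF \<mu> \<nu> g2 x\<bar>
        \<le> c * supnorm (\<lambda>t. g2 t - g1 t) * \<bar>x\<bar> powr (1 - 2 * \<mu>)) \<and>
     (\<forall>x. \<bar>FF \<mu> \<nu> g1 x - FF \<mu> \<nu> g2 x\<bar> \<le> c * supnorm (\<lambda>t. g2 t - g1 t))"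
      unfolding \<delta>_def[symmetric]
    proof (intro conjI allI impI)
      fix x :: real
      have "\<bar>Fd \<mu> \<nu> g1 x - Fd \<mu> \<nu> g2 x\<bar> \<le> K M * \<delta> * R x"
        by (rule Fd_diff[OF gm1 gM1 gm2 gM2 d])
      also have "\<dots> \<le> c * \<delta> * R x"
        using cK d0 R_nonneg[of x] by (intro mult_right_mono) auto
      finally show "\<bar>Fd \<mu> \<nu> g1 x - Fd \<mu> \<nu> g2 x\<bar>
          \<le> c * \<delta> * (1 / (\<bar>x\<bar> powr (2 * \<nu>) * (x\<^sup>2 + 1) powr (\<mu> - \<nu>)))"
        unfolding R_def .
    next
      fix x :: real
      have "\<bar>FF \<mu> \<nu> g1 x - FF \<mu> \<nu> g2 x\<bar> \<le> K M * \<delta> * (LBINT t:{x<..}. R t)"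
        by (rule FF_diff_gen[OF gm1 gM1 gm2 gM2 d])
      also have "\<dots> \<le> K M * \<delta> * SR"
        using KM d0 R_on_le[of "{x<..}"] by (intro mult_left_mono) auto
      also have "\<dots> \<le> c * \<delta>"
        using cKS d0 by (metis mult.commute mult.left_commute mult_right_mono)
      finally show "\<bar>FF \<mu> \<nu> g1 x - FF \<mu> \<nu> g2 x\<bar> \<le> c * \<delta>" .
    next
      fix x :: real assume x1: "1 \<le> \<bar>x\<bar>"
      have "\<bar>FF \<mu> \<nu> g1 x - FF \<mu> \<nu> g2 x\<bar> \<le> K M * \<delta> * (\<bar>x\<bar> powr (1 - 2*\<mu>) / (2*\<mu> - 1))"
      proof (cases "0 \<le> x")
        case True
        then have xp: "0 < x" using x1 by simp
        have "\<bar>FF \<mu> \<nu> g1 x - FF \<mu> \<nu> g2 x\<bar> \<le> K M * \<delta> * (LBINT t:{x<..}. R t)"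
          by (rule FF_diff_gen[OF gm1 gM1 gm2 gM2 d])
        also have "\<dots> \<le> K M * \<delta> * (x powr (1 - 2*\<mu>) / (2*\<mu> - 1))"
          using KM d0 R_tail_right[OF xp] by (intro mult_left_mono) auto
        finally show ?thesis using True by simp
      next
        case False
        then have xp: "0 < -x" by simp
        have e: "{..- (-x)} = {..x}" by simp
        have "\<bar>FF \<mu> \<nu> g1 x - FF \<mu> \<nu> g2 x\<bar> \<le> K M * \<delta> * (LBINT t:{..x}. R t)"
          by (rule FF_diff_left[OF gm1 gM1 gm2 gM2 d])
        also have "\<dots> \<le> K M * \<delta> * ((-x) powr (1 - 2*\<mu>) / (2*\<mu> - 1))"
          using KM d0 R_tail_left[OF xp, unfolded e] by (intro mult_left_mono) auto
        finally show ?thesis using False by simp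
      qed
      also have "\<dots> = (K M * (1 / (2*\<mu> - 1))) * \<delta> * \<bar>x\<bar> powr (1 - 2*\<mu>)" by simp
      also have "\<dots> \<le> c * \<delta> * \<bar>x\<bar> powr (1 - 2*\<mu>)"
        using cKm d0 by (intro mult_right_mono) auto
      finally show "\<bar>FF \<mu> \<nu> g1 x - FF \<mu> \<nu> g2 x\<bar> \<le> c * \<delta> * \<bar>x\<bar> powr (1 - 2 * \<mu>)" .
    qed
  qed
qed

end
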